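(* Consider Algorithm 1 (described in the context) applied to the multistage model, and suppose it does not stop at Step 1. Then for every iteration index $k\ge1$, the iterate $(\boldsymbol x^k,\eta^k,\boldsymbol y^k,u^k)$ is feasible for the multistage model, and $$z^{MS}_{T,R}(\boldsymbol x^*,\eta^*,\boldsymbol y^*,u^* )\le z^{MS}_{T,R}(\boldsymbol x^{k+1},\eta^{k+1},\boldsymbol y^{k+1},u^{k+1})\le z^{MS}_{T,R}(\boldsymbol x^{k},\eta^{k},\boldsymbol y^{k},u^{k}),$$ where $(\boldsymbol x^*,\eta^*,\boldsymbol y^*,u^* )$ is an optimal solution of the multistage model.
   Context: Setting. Integers $T\ge2$, $M,N\ge1$; costs $f_{ti}\ge0$ (vector $\boldsymbol f_t$), $c_{tij}\ge0$ (vector $\boldsymbol c_t\in\mathbb R^{MN}$), capacities $h_{ti}>0$; $(\boldsymbol A_t\boldsymbol y)_j=\sum_iy_{ij}$, $(\boldsymbol B_t\boldsymbol y)_i=\frac1{h_{ti}}\sum_jy_{ij}$. Ceilings and maxima of vectors are componentwise. Scenario tree: finite rooted tree, node set $\mathcal T$, root $1$, all root-to-leaf paths of $T$ nodes; $\mathcal T_t$ nodes at depth $t$, $t_n$ period of $n$, $\mathcal L=\mathcal T_T$, $a(n)$ parent, $\mathcal C(n)$ children, $\mathcal P(n)$ nodes on the root-to-$n$ path (inclusive); probabilities $p_n>0$, $\sum_{n\in\mathcal T_t}p_n=1$, $\sum_{m\in\mathcal C(n)}p_m=p_n$; demands $\boldsymbol d_n\in\mathbb R^N_{\ge0}$. Risk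 parameters $\lambda_t\in[0,1]$, $\alpha_t\in(0,1)$ ($t\ge2$); $\tilde{\boldsymbol f}_n=\boldsymbol f_{t_n}$ if $n=1$ else $(1-\lambda_{t_n})\boldsymbol f_{t_n}$; $\tilde{\boldsymbol c}_n=\boldsymbol c_{t_n}$ if $n=1$ else $(1-\lambda_{t_n})\boldsymbol c_{t_n}$; $\tilde\lambda_n=0$ if $n\in\mathcal L$ else $\lambda_{t_n+1}$; $\tilde\alpha_n=0$ if $n=1$ else $\lambda_{t_n}/(1-\alpha_{t_n})$. Multistage model: minimize $z^{MS}_{T,R}(\boldsymbol x,\eta,\boldsymbol y,u):=\sum_{n\in\mathcal T}p_n\big(\tilde{\boldsymbol f}_n^{\mathsf T}\sum_{m\in\mathcal P(n)}\boldsymbol x_m+\tilde{\boldsymbol c}_n^{\mathsf T}\boldsymbol y_n+\tilde\lambda_n\eta_n+\tilde\alpha_nu_n\big)$ over $\boldsymbol x_n\in\mathbb Z^M_+$, $\boldsymbol y_n\in\mathbb R^{MN}_+$ ($n\in\mathcal T$), $\eta_n\in\mathbb R$ ($n\notin\mathcal L$), $u_n\ge0$ ($n\ne1$), subject to $\boldsymbol A_{t_n}\boldsymbol y_n=\boldsymbol d_n$, $\boldsymbol B_{t_n}\boldsymbol y_n\le\sum_{m\in\mathcal P(n)}\boldsymbol x_m$ ($n\in\mathcal T$), $u_n+\eta_{a(n)}\ge\boldsymbol f_{t_n}^{\mathsf T}\sum_{m\in\mathcal P(n)}\boldsymbol x_m+\boldsymbol c_{t_n}^{\mathsf T}\boldsymbol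 y_n$ ($n\ne1$). Algorithm 1. Step 1: solve the LP relaxation (drop integrality of $\boldsymbol x$) of the multistage model, obtaining an optimal $(\boldsymbol x^{MSLP},\eta^{MSLP},\boldsymbol y^{MSLP},u^{MSLP})$; if all $\boldsymbol x^{MSLP}_n$ are integral, stop and return it. Step 2: set $k=0$ and $(\boldsymbol x^0,\eta^0,\boldsymbol y^0,u^0)=(\boldsymbol x^{MSLP},\eta^{MSLP},\boldsymbol y^{MSLP},u^{MSLP})$. Repeat until successive iterates differ by less than a tolerance $\epsilon$: (a) set $\boldsymbol x^{k+1}_1=\lceil\boldsymbol B_{t_1}\boldsymbol y^k_1\rceil$, $\boldsymbol x^{k+1}_n=\max_{m\in\mathcal P(n)}\lceil\boldsymbol B_{t_m}\boldsymbol y^k_m\rceil-\max_{m\in\mathcal P(a(n))}\lceil\boldsymbol B_{t_m}\boldsymbol y^k_m\rceil$ ($n\ne1$), $\eta^{k+1}_n=\max_{m\in\mathcal C(n)}\{\boldsymbol f_{t_m}^{\mathsf T}\sum_{l\in\mathcal P(m)}\boldsymbol x^{k+1}_l+\boldsymbol c_{t_m}^{\mathsf T}\boldsymbol y^k_m-u^k_m\}$ ($n\notin\mathcal L$) (this is an optimal solution of the multistage model in the variables $(\boldsymbol x,\eta)$ with $(\boldsymbol y,u)=(\boldsymbol y^k,u^k)$ fixed); (b) for each $n\ne1$ independently, let $(\boldsymbol y^{k+1}_n,u^{k+1}_n)$ be an optimal solution of $\min\tilde{\boldsymbol c}_n^{\mathsf T}\boldsymbol y_n+\tilde\alpha_nu_n$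 s.t. $\boldsymbol B_{t_n}\boldsymbol y_n\le\sum_{m\in\mathcal P(n)}\boldsymbol x^{k+1}_m$, $\boldsymbol A_{t_n}\boldsymbol y_n=\boldsymbol d_n$, $u_n-\boldsymbol c_{t_n}^{\mathsf T}\boldsymbol y_n\ge\boldsymbol f_{t_n}^{\mathsf T}\sum_{m\in\mathcal P(n)}\boldsymbol x^{k+1}_m-\eta^{k+1}_{a(n)}$, $\boldsymbol y_n\ge0$, $u_n\ge0$; for $n=1$ solve the same problem without $u_1$ and the last constraint; (c) $k\leftarrow k+1$. Return the final iterate, denoted $(\boldsymbol x^H,\eta^H,\boldsymbol y^H,u^H)$. *)

theory Defs
  imports Main "HOL-Library.Library" Complex_Main
begin

text \<open>Problem data of the risk-averse multistage model. Periods are 1..T,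
  facilities are indexed 0..M-1, customers 0..N-1.\<close>

record 'n msdata =
  Tn   :: "'n set"
  rt   :: 'n
  par  :: "'n \<Rightarrow> 'n"
  per  :: "'n \<Rightarrow> nat"
  prob :: "'n \<Rightarrow> real"
  dem  :: "'n \<Rightarrow> nat \<Rightarrow> real"
  TT   :: nat
  MM   :: nat
  NN   :: nat
  fc   :: "nat \<Rightarrow> nat \<Rightarrow> real"
  cc   :: "nat \<Rightarrow> nat \<Rightarrow> nat \<Rightarrow> real"
  cap  :: "nat \<Rightarrow> nat \<Rightarrow> real"
  lam  :: "nat \<Rightarrow> real"
  alph :: "nat \<Rightarrow> real"

definition children :: "'n msdata \<Rightarrow> 'n \<Rightarrow> 'n set" where
  "children D n = {m \<in> Tn D. m \<noteq> rt D \<and> par D m = n}"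

definition leaves :: "'n msdata \<Rightarrow> 'n set" where
  "leaves D = {n \<in> Tn D. per D n = TT D}"

definition anc :: "'n msdata \<Rightarrow> 'n \<Rightarrow> 'n set" where
  "anc D n = {(par D ^^ k) n | k. k < per D n}"

definition valid_data :: "'n msdata \<Rightarrow> bool" where
  "valid_data D \<longleftrightarrow>
     TT D \<ge> 2 \<and> MM D \<ge> 1 \<and> NN D \<ge> 1 \<and>
     (\<forall>t\<in>{1..TT D}. \<forall>i<MM D. fc D t i \<ge> 0 \<and> cap D t i > 0 \<and>
        (\<forall>j<NN D. cc D t i j \<ge> 0)) \<and>
     finite (Tn D) \<and> rt D \<in> Tn D \<and> per D (rt D) = 1 \<and>
     (\<forall>n\<in>Tn D. 1 \<le> per D n \<and> per D n \<le> TT D) \<and>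
     (\<forall>n\<in>Tn D. n \<noteq> rt D \<longrightarrow> par D n \<in> Tn D \<and> per D n = per D (par D n) + 1) \<and>
     (\<forall>n\<in>Tn D. per D n < TT D \<longrightarrow> children D n \<noteq> {}) \<and>
     (\<forall>n\<in>Tn D. prob D n > 0) \<and>
     (\<forall>t\<in>{1..TT D}. (\<Sum>n\<in>{n\<in>Tn D. per D n = t}. prob D n) = 1) \<and>
     (\<forall>n\<in>Tn D. per D n < TT D \<longrightarrow> (\<Sum>m\<in>children D n. prob D m) = prob D n) \<and>
     (\<forall>n\<in>Tn D. \<forall>j<NN D. dem D n j \<ge> 0) \<and>
     (\<forall>t\<in>{2..TT D}. 0 \<le> lam D t \<and> lam D t \<le> 1 \<and> 0 < alph D t \<and> alph D t < 1)"

text \<open>Components at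
  indices/nodes where the model has no variable (eta at leaves, u at the
  root) are ignored (they have coefficient 0 and appear in no constraint).\<close>
type_synonym 'n sol =
  "('n \<Rightarrow> nat \<Rightarrow> real) \<times> ('n \<Rightarrow> real) \<times> ('n \<Rightarrow> nat \<Rightarrow> nat \<Rightarrow> real) \<times> ('n \<Rightarrow> real)"

definition cumx :: "'n msdata \<Rightarrow> ('n \<Rightarrow> nat \<Rightarrow> real) \<Rightarrow> 'n \<Rightarrow> nat \<Rightarrow> real" where
  "cumx D x n i = (\<Sum>m\<in>anc D n. x m i)"

definition Bop :: "'n msdata \<Rightarrow> nat \<Rightarrow> (nat \<Rightarrow> nat \<Rightarrow> real) \<Rightarrow> nat \<Rightarrow> real" where
  "Bop D t yn i = (1 / cap D t i) * (\<Sum>j<NN D. yn i j)"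

definition Aop :: "'n msdata \<Rightarrow> (nat \<Rightarrow> nat \<Rightarrow> real) \<Rightarrow> nat \<Rightarrow> real" where
  "Aop D yn j = (\<Sum>i<MM D. yn i j)"

definition fcost :: "'n msdata \<Rightarrow> nat \<Rightarrow> (nat \<Rightarrow> real) \<Rightarrow> real" where
  "fcost D t X = (\<Sum>i<MM D. fc D t i * X i)"

definition ccost :: "'n msdata \<Rightarrow> nat \<Rightarrow> (nat \<Rightarrow> nat \<Rightarrow> real) \<Rightarrow> real" where
  "ccost D t yn = (\<Sum>i<MM D. \<Sum>j<NN D. cc D t i j * yn i j)"

definition wfac :: "'n msdata \<Rightarrow> 'n \<Rightarrow> real" where
  "wfac D n = (if n = rt D then 1 else 1 - lam D (per D n))"

definition lamtil :: "'n msdata \<Rightarrow> 'n \<Rightarrow> real" where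
  "lamtil D n = (if n \<in> leaves D then 0 else lam D (per D n + 1))"

definition alphatil :: "'n msdata \<Rightarrow> 'n \<Rightarrow> real" where
  "alphatil D n = (if n = rt D then 0 else lam D (per D n) / (1 - alph D (per D n)))"

definition zMS :: "'n msdata \<Rightarrow> 'n sol \<Rightarrow> real" where
  "zMS D s = (case s of (x, eta, y, u) \<Rightarrow>
     (\<Sum>n\<in>Tn D. prob D n *
        (wfac D n * fcost D (per D n) (cumx D x n) + wfac D n * ccost D (per D n) (y n)
         + lamtil D n * eta n + alphatil D n * u n)))"

text \<open>Feasibility; integral = True gives the multistage model, integral = False
  its LP relaxation.\<close>
definition feasible :: "'n msdata \<Rightarrow> bool \<Rightarrow> 'n sol \<Rightarrow> bool" where
  "feasible D integral s = (case s of (x, eta, y, u) \<Rightarrow>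
     (\<forall>n\<in>Tn D.
        (\<forall>i<MM D. x n i \<ge> 0 \<and> (integral \<longrightarrow> x n i \<in> \<int>)) \<and>
        (\<forall>i<MM D. \<forall>j<NN D. y n i j \<ge> 0) \<and>
        (\<forall>j<NN D. Aop D (y n) j = dem D n j) \<and>
        (\<forall>i<MM D. Bop D (per D n) (y n) i \<le> cumx D x n i) \<and>
        (n \<noteq> rt D \<longrightarrow> u n \<ge> 0 \<and>
           u n + eta (par D n) \<ge> fcost D (per D n) (cumx D x n) + ccost D (per D n) (y n))))"

definition is_opt :: "'n msdata \<Rightarrow> bool \<Rightarrow> 'n sol \<Rightarrow> bool" where
  "is_opt D integral s \<longleftrightarrow> feasible D integral s \<and>
     (\<forall>s'. feasible D integral s' \<longrightarrow> zMS D s \<le> zMS D s')"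

definition ceilB :: "'n msdata \<Rightarrow> ('n \<Rightarrow> nat \<Rightarrow> nat \<Rightarrow> real) \<Rightarrow> 'n \<Rightarrow> nat \<Rightarrow> real" where
  "ceilB D y m i = real_of_int \<lceil>Bop D (per D m) (y m) i\<rceil>"

definition stepA :: "'n msdata \<Rightarrow> 'n sol \<Rightarrow> 'n sol \<Rightarrow> bool" where
  "stepA D s s' = (case s of (x, eta, y, u) \<Rightarrow> case s' of (x', eta', y', u') \<Rightarrow>
     (\<forall>i<MM D. x' (rt D) i = ceilB D y (rt D) i) \<and>
     (\<forall>n\<in>Tn D. n \<noteq> rt D \<longrightarrow> (\<forall>i<MM D.
        x' n i = Max ((\<lambda>m. ceilB D y m i) ` anc D n)
                 - Max ((\<lambda>m. ceilB D y m i) ` anc D (par D n)))) \<and>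
     (\<forall>n\<in>Tn D. n \<notin> leaves D \<longrightarrow>
        eta' n = Max ((\<lambda>m. fcost D (per D m) (cumx D x' m) + ccost D (per D m) (y m) - u m)
                      ` children D n)))"

text \<open>Node subproblem of step (b), given (x^{k+1}, eta^{k+1}).\<close>
definition sub_feas :: "'n msdata \<Rightarrow> ('n \<Rightarrow> nat \<Rightarrow> real) \<Rightarrow> ('n \<Rightarrow> real) \<Rightarrow> 'n
    \<Rightarrow> (nat \<Rightarrow> nat \<Rightarrow> real) \<Rightarrow> real \<Rightarrow> bool" where
  "sub_feas D x eta n yn un \<longleftrightarrow>
     (\<forall>i<MM D. Bop D (per D n) yn i \<le> cumx D x n i) \<and>
     (\<forall>j<NN D. Aop D yn j = dem D n j) \<and>
     (\<forall>i<MM D. \<forall>j<NN D. yn i j \<ge> 0) \<and>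
     (n \<noteq> rt D \<longrightarrow> un \<ge> 0 \<and>
        un - ccost D (per D n) yn \<ge> fcost D (per D n) (cumx D x n) - eta (par D n))"

definition sub_obj :: "'n msdata \<Rightarrow> 'n \<Rightarrow> (nat \<Rightarrow> nat \<Rightarrow> real) \<Rightarrow> real \<Rightarrow> real" where
  "sub_obj D n yn un = (if n = rt D then ccost D (per D n) yn
                        else wfac D n * ccost D (per D n) yn + alphatil D n * un)"

definition stepB :: "'n msdata \<Rightarrow> 'n sol \<Rightarrow> bool" where
  "stepB D s' = (case s' of (x', eta', y', u') \<Rightarrow>
     (\<forall>n\<in>Tn D. sub_feas D x' eta' n (y' n) (u' n) \<and>
        (\<forall>yn un. sub_feas D x' eta' n yn un \<longrightarrow>
           sub_obj D n (y' n) (u' n) \<le> sub_obj D n yn un)))"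

text \<open>A run of Algorithm 1 that did not stop at Step 1, with iterates
  it 0, ..., it K (K iterations of Step 2 performed).\<close>
definition alg_run :: "'n msdata \<Rightarrow> nat \<Rightarrow> (nat \<Rightarrow> 'n sol) \<Rightarrow> bool" where
  "alg_run D K it \<longleftrightarrow>
     is_opt D False (it 0) \<and>
     \<not> (\<forall>n\<in>Tn D. \<forall>i<MM D. fst (it 0) n i \<in> \<int>) \<and>
     (\<forall>k<K. stepA D (it k) (it (Suc k)) \<and> stepB D (it (Suc k)))"

end

theory Submission
  imports Defs
begin

lemma vd_facts:
  assumes "valid_data D"
  shows "finite (Tn D)" "rt D \<in> Tn D" "per D (rt D) = 1"
    "\<And>n. n \<in> Tn D \<Longrightarrow> 1 \<le> per D n \<and> per D n \<le> TT D"
    "\<And>n. n \<in> Tn D \<Longrightarrow> n \<noteq> rt D \<Longrightarrow> par D n \<in> Tn D \<and> per D n = per D (par D n) + 1"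
    "\<And>n. n \<in> Tn D \<Longrightarrow> per D n < TT D \<Longrightarrow> children D n \<noteq> {}"
    "\<And>n. n \<in> Tn D \<Longrightarrow> prob D n > 0"
    "\<And>t i. t \<in> {1..TT D} \<Longrightarrow> i < MM D \<Longrightarrow> fc D t i \<ge> 0 \<and> cap D t i > 0"
    "\<And>t. t \<in> {2..TT D} \<Longrightarrow> 0 \<le> lam D t \<and> lam D t \<le> 1"
  using assms unfolding valid_data_def by auto

lemma par_iter:
  assumes vd: "valid_data D" and m: "m \<in> Tn D"
  shows "j < per D m \<Longrightarrow> (par D ^^ j) m \<in> Tn D \<and> per D ((par D ^^ j) m) = per D m - j"
proof (induction j)
  case 0 then show ?case using m by simp
next
  case (Suc j)
  then have IH: "(par D ^^ j) m \<in> Tn D \<and> per D ((par D ^^ j) m) = per D m - j" by simp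
  then have ne: "(par D ^^ j) m \<noteq> rt D" using Suc.prems vd_facts(3)[OF vd] by auto
  show ?case using vd_facts(5)[OF vd, of "(par D ^^ j) m"] IH ne Suc.prems by auto
qed

lemma anc_img: "anc D n = (\<lambda>k. (par D ^^ k) n) ` {..<per D n}"
  unfolding anc_def by auto

lemma anc_fin: "finite (anc D n)"
  unfolding anc_img by simp

lemma anc_sub: assumes vd: "valid_data D" and n: "n \<in> Tn D" shows "anc D n \<subseteq> Tn D"
  using par_iter[OF vd n] unfolding anc_def by auto

lemma anc_self: assumes vd: "valid_data D" and n: "n \<in> Tn D" shows "n \<in> anc D n"
proof -
  have "0 < per D n" using vd_facts(4)[OF vd n] by simp
  then show ?thesis unfolding anc_def by force
qed

lemma anc_rt: assumes vd: "valid_data D" shows "anc D (rt D) = {rt D}"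
  unfolding anc_def using vd_facts(3)[OF vd] by auto

lemma anc_par: assumes vd: "valid_data D" and n: "n \<in> Tn D" and nr: "n \<noteq> rt D"
  shows "anc D n = insert n (anc D (par D n))"
proof -
  have p: "per D n = Suc (per D (par D n))" using vd_facts(5)[OF vd n nr] by simp
  have "(\<lambda>k. (par D ^^ k) n) ` {..<Suc (per D (par D n))}
      = insert n ((\<lambda>k. (par D ^^ k) (par D n)) ` {..<per D (par D n)})"
    unfolding lessThan_Suc_eq_insert_0 by (simp add: image_image funpow_Suc_right del: funpow.simps)
  then show ?thesis unfolding anc_img p .
qed

lemma anc_par_notin: assumes vd: "valid_data D" and n: "n \<in> Tn D" and nr: "n \<noteq> rt D"
  shows "n \<notin> anc D (par D n)"
proof
  assume "n \<in> anc D (par D n)"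
  then obtain k where k: "k < per D (par D n)" "n = (par D ^^ k) (par D n)" unfolding anc_def by auto
  have pn: "par D n \<in> Tn D" "per D n = per D (par D n) + 1" using vd_facts(5)[OF vd n nr] by auto
  have "per D ((par D ^^ k) (par D n)) = per D (par D n) - k" using par_iter[OF vd pn(1) k(1)] by simp
  then show False using k pn by simp
qed

lemma anc_mono: assumes vd: "valid_data D" and n: "n \<in> Tn D" and m: "m \<in> anc D n"
  shows "anc D m \<subseteq> anc D n"
proof
  fix z assume z: "z \<in> anc D m"
  obtain j where j: "j < per D n" "m = (par D ^^ j) n" using m unfolding anc_def by auto
  have pm: "per D m = per D n - j" using par_iter[OF vd n j(1)] j by simp
  obtain l where l: "l < per D m" "z = (par D ^^ l) m" using z unfolding anc_def by auto
  have "z = (par D ^^ (l + j)) n" using l j by (simp add: funpow_add)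
  moreover have "l + j < per D n" using l pm j by simp
  ultimately show "z \<in> anc D n" unfolding anc_def by blast
qed

lemma cumx_stepA:
  assumes vd: "valid_data D" and A: "stepA D (x,eta,y,u) (x',eta',y',u')"
  shows "n \<in> Tn D \<Longrightarrow> i < MM D \<Longrightarrow> cumx D x' n i = Max ((\<lambda>m. ceilB D y m i) ` anc D n)"
proof (induction "per D n" arbitrary: n rule: less_induct)
  case less
  show ?case
  proof (cases "n = rt D")
    case True
    then show ?thesis using A anc_rt[OF vd] less.prems by (simp add: stepA_def cumx_def)
  next
    case False
    have p: "par D n \<in> Tn D" "per D n = per D (par D n) + 1" using vd_facts(5)[OF vd less.prems(1) False] by auto
    have IH: "cumx D x' (par D n) i = Max ((\<lambda>m. ceilB D y m i) ` anc D (par D n))"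
      using less.hyps[of "par D n"] p less.prems(2) by simp
    have "cumx D x' n i = x' n i + cumx D x' (par D n) i"
      unfolding cumx_def using anc_par[OF vd less.prems(1) False] anc_par_notin[OF vd less.prems(1) False] anc_fin[of D "par D n"]
      by (simp add: sum.insert)
    also have "x' n i = Max ((\<lambda>m. ceilB D y m i) ` anc D n) - Max ((\<lambda>m. ceilB D y m i) ` anc D (par D n))"
      using A less.prems False unfolding stepA_def by auto
    finally show ?thesis using IH by simp
  qed
qed

lemma fcost_mono:
  assumes vd: "valid_data D" and t: "t \<in> {1..TT D}" and le: "\<And>i. i < MM D \<Longrightarrow> X i \<le> Y i"
  shows "fcost D t X \<le> fcost D t Y"
  unfolding fcost_def
  by (rule sum_mono) (use vd_facts(8)[OF vd t] le in \<open>auto intro: mult_left_mono\<close>)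

lemma ceilB_Ints: "ceilB D y m i \<in> \<int>"
  unfolding ceilB_def by simp

lemma Max_Ints: "finite A \<Longrightarrow> A \<noteq> {} \<Longrightarrow> A \<subseteq> \<int> \<Longrightarrow> Max A \<in> (\<int> :: real set)"
  using Max_in by blast

lemma step_feasible:
  assumes vd: "valid_data D" and F: "feasible D b (x,eta,y,u)"
    and A: "stepA D (x,eta,y,u) (x',eta',y',u')" and B: "stepB D (x',eta',y',u')"
  shows "feasible D True (x',eta',y',u')"
  unfolding feasible_def
proof (simp only: prod.case, intro ballI conjI)
  fix n assume n: "n \<in> Tn D"
  have sf: "sub_feas D x' eta' n (y' n) (u' n)" using B n unfolding stepB_def by auto
  show "\<forall>i<MM D. 0 \<le> x' n i \<and> (True \<longrightarrow> x' n i \<in> \<int>)"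
  proof (intro allI impI conjI)
    fix i assume i: "i < MM D"
    show "0 \<le> x' n i"
    proof (cases "n = rt D")
      case True
      have rtT: "rt D \<in> Tn D" "per D (rt D) \<in> {1..TT D}" using vd_facts(2,3,4)[OF vd] by force+
      have "cap D (per D (rt D)) i > 0" using vd_facts(8)[OF vd rtT(2) i] by simp
      moreover have "\<forall>j<NN D. y (rt D) i j \<ge> 0" using F rtT(1) i unfolding feasible_def by auto
      ultimately have "Bop D (per D (rt D)) (y (rt D)) i \<ge> 0" unfolding Bop_def
        by (auto intro!: sum_nonneg divide_nonneg_pos)
      then show ?thesis using A True i unfolding stepA_def ceilB_def by auto
    next
      case False
      have pn: "par D n \<in> Tn D" using vd_facts(5)[OF vd n False] by auto
      have "Max ((\<lambda>m. ceilB D y m i) ` anc D (par D n)) \<le> Max ((\<lambda>m. ceilB D y m i) ` anc D n)"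
        by (rule Max_mono) (use anc_par[OF vd n False] anc_self[OF vd pn] anc_fin[of D n] in auto)
      then show ?thesis using A n False i unfolding stepA_def by auto
    qed
    show "x' n i \<in> \<int>"
    proof (cases "n = rt D")
      case True
      then show ?thesis using A i ceilB_Ints unfolding stepA_def by auto
    next
      case False
      have pn: "par D n \<in> Tn D" using vd_facts(5)[OF vd n False] by auto
      have "Max ((\<lambda>m. ceilB D y m i) ` anc D (par D n)) \<in> \<int>"
        by (rule Max_Ints) (use anc_self[OF vd pn] anc_fin[of D "par D n"] ceilB_Ints in auto)
      moreover have "Max ((\<lambda>m. ceilB D y m i) ` anc D n) \<in> \<int>"
        by (rule Max_Ints) (use anc_self[OF vd n] anc_fin[of D n] ceilB_Ints in auto)
      ultimately show ?thesis using A n False i unfolding stepA_def by auto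
    qed
  qed
qed (use B in \<open>auto simp: stepB_def sub_feas_def\<close>)

definition FF :: "'n msdata \<Rightarrow> ('n \<Rightarrow> nat \<Rightarrow> real) \<Rightarrow> ('n \<Rightarrow> real) \<Rightarrow> real" where
  "FF D x eta = (\<Sum>n\<in>Tn D. prob D n * (wfac D n * fcost D (per D n) (cumx D x n) + lamtil D n * eta n))"

definition GG :: "'n msdata \<Rightarrow> ('n \<Rightarrow> nat \<Rightarrow> nat \<Rightarrow> real) \<Rightarrow> ('n \<Rightarrow> real) \<Rightarrow> real" where
  "GG D y u = (\<Sum>n\<in>Tn D. prob D n * sub_obj D n (y n) (u n))"

lemma zMS_split: "zMS D (x,eta,y,u) = FF D x eta + GG D y u"
  unfolding zMS_def FF_def GG_def sum.distrib[symmetric] prod.case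
  by (rule sum.cong) (auto simp: sub_obj_def alphatil_def wfac_def algebra_simps)

lemma step_mono:
  assumes vd: "valid_data D" and F: "feasible D True (x,eta,y,u)"
    and A: "stepA D (x,eta,y,u) (x',eta',y',u')" and B: "stepB D (x',eta',y',u')"
  shows "zMS D (x',eta',y',u') \<le> zMS D (x,eta,y,u)"
proof -
  have xnn: "\<And>n i. n \<in> Tn D \<Longrightarrow> i < MM D \<Longrightarrow> 0 \<le> x n i \<and> x n i \<in> \<int>"
    using F unfolding feasible_def by auto
  have Ble: "\<And>n i. n \<in> Tn D \<Longrightarrow> i < MM D \<Longrightarrow> Bop D (per D n) (y n) i \<le> cumx D x n i"
    using F unfolding feasible_def by auto
  have cumx_Ints: "\<And>n i. n \<in> Tn D \<Longrightarrow> i < MM D \<Longrightarrow> cumx D x n i \<in> \<int>"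
    unfolding cumx_def using xnn anc_sub[OF vd] by (meson Ints_sum subsetD)
  have cumx_mono: "\<And>n m i. n \<in> Tn D \<Longrightarrow> m \<in> anc D n \<Longrightarrow> i < MM D \<Longrightarrow> cumx D x m i \<le> cumx D x n i"
  proof -
    fix n m i assume n: "n \<in> Tn D" and m: "m \<in> anc D n" and i: "i < MM D"
    show "cumx D x m i \<le> cumx D x n i" unfolding cumx_def
      by (rule sum_mono2) (use anc_fin[of D n] anc_mono[OF vd n m] anc_sub[OF vd n] xnn i in auto)
  qed
  have cle: "\<And>n i. n \<in> Tn D \<Longrightarrow> i < MM D \<Longrightarrow> cumx D x' n i \<le> cumx D x n i"
  proof -
    fix n i assume n: "n \<in> Tn D" and i: "i < MM D"
    have "Max ((\<lambda>m. ceilB D y m i) ` anc D n) \<le> cumx D x n i"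
    proof (subst Max_le_iff, simp add: anc_fin, use anc_self[OF vd n] in blast, intro ballI)
      fix c assume "c \<in> (\<lambda>m. ceilB D y m i) ` anc D n"
      then obtain m where m: "m \<in> anc D n" "c = ceilB D y m i" by auto
      have mT: "m \<in> Tn D" using anc_sub[OF vd n] m by auto
      have b: "Bop D (per D m) (y m) i \<le> cumx D x n i"
        using Ble[OF mT i] cumx_mono[OF n m(1) i] by simp
      obtain k where k: "cumx D x n i = of_int k" using cumx_Ints[OF n i] Ints_cases by blast
      have "\<lceil>Bop D (per D m) (y m) i\<rceil> \<le> k" using b k by (simp add: ceiling_le_iff)
      then show "c \<le> cumx D x n i" using m k unfolding ceilB_def by simp
    qed
    then show "cumx D x' n i \<le> cumx D x n i" using cumx_stepA[OF vd A n i] by simp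
  qed
  have fle: "\<And>n. n \<in> Tn D \<Longrightarrow> fcost D (per D n) (cumx D x' n) \<le> fcost D (per D n) (cumx D x n)"
    using fcost_mono[OF vd] cle vd_facts(4)[OF vd] by auto
  have G: "GG D y' u' \<le> GG D y u"
    unfolding GG_def
  proof (rule sum_mono)
    fix n assume n: "n \<in> Tn D"
    have "sub_feas D x' eta' n (y n) (u n)"
      unfolding sub_feas_def
    proof (intro conjI impI allI)
      fix i assume i: "i < MM D"
      have "ceilB D y n i \<le> Max ((\<lambda>m. ceilB D y m i) ` anc D n)"
        by (rule Max_ge) (use anc_fin[of D n] anc_self[OF vd n] in auto)
      moreover have "Bop D (per D n) (y n) i \<le> ceilB D y n i" unfolding ceilB_def by simp
      ultimately show "Bop D (per D n) (y n) i \<le> cumx D x' n i" using cumx_stepA[OF vd A n i] by simp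
    next
      fix j assume "j < NN D" then show "Aop D (y n) j = dem D n j" using F n unfolding feasible_def by auto
    next
      fix i j assume "i < MM D" "j < NN D" then show "0 \<le> y n i j" using F n unfolding feasible_def by auto
    next
      assume "n \<noteq> rt D" then show "0 \<le> u n" using F n unfolding feasible_def by auto
    next
      assume nr: "n \<noteq> rt D"
      have pn: "par D n \<in> Tn D" "per D n = per D (par D n) + 1" using vd_facts(5)[OF vd n nr] by auto
      have nl: "par D n \<notin> leaves D" using pn vd_facts(4)[OF vd n] unfolding leaves_def by auto
      have ch: "n \<in> children D (par D n)" unfolding children_def using n nr by auto
      have fin: "finite (children D (par D n))" unfolding children_def using vd_facts(1)[OF vd] by auto
      have "fcost D (per D n) (cumx D x' n) + ccost D (per D n) (y n) - u n \<le> eta' (par D n)"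
      proof -
        have eq: "eta' (par D n) = Max ((\<lambda>m. fcost D (per D m) (cumx D x' m) + ccost D (per D m) (y m) - u m) ` children D (par D n))"
          using A pn(1) nl unfolding stepA_def by auto
        show ?thesis unfolding eq by (rule Max_ge) (use fin ch in auto)
      qed
      then show "fcost D (per D n) (cumx D x' n) - eta' (par D n) \<le> u n - ccost D (per D n) (y n)"
        by simp
    qed
    then have "sub_obj D n (y' n) (u' n) \<le> sub_obj D n (y n) (u n)" using B n unfolding stepB_def by auto
    then show "prob D n * sub_obj D n (y' n) (u' n) \<le> prob D n * sub_obj D n (y n) (u n)"
      using vd_facts(7)[OF vd n] by (simp add: mult_left_mono)
  qed
  have Fx: "FF D x' eta' \<le> FF D x eta"
    unfolding FF_def
  proof (rule sum_mono)
    fix n assume n: "n \<in> Tn D"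
    have pr: "per D n \<in> {1..TT D}" using vd_facts(4)[OF vd n] by auto
    have w: "wfac D n \<ge> 0"
    proof (cases "n = rt D")
      case False
      have "per D n \<in> {2..TT D}" using vd_facts(5)[OF vd n False] pr vd_facts(4)[OF vd, of "par D n"] by auto
      then show ?thesis using vd_facts(9)[OF vd] False unfolding wfac_def by auto
    qed (simp add: wfac_def)
    have e: "lamtil D n * eta' n \<le> lamtil D n * eta n"
    proof (cases "n \<in> leaves D")
      case True then show ?thesis by (simp add: lamtil_def)
    next
      case False
      have lt: "per D n < TT D" using False n pr unfolding leaves_def by auto
      have l0: "lamtil D n \<ge> 0" using False lt pr vd_facts(9)[OF vd, of "per D n + 1"] unfolding lamtil_def by auto
      have fin: "finite (children D n)" unfolding children_def using vd_facts(1)[OF vd] by auto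
      have ne: "children D n \<noteq> {}" using vd_facts(6)[OF vd n lt] .
      have "eta' n \<le> eta n"
      proof -
        have "eta' n = Max ((\<lambda>m. fcost D (per D m) (cumx D x' m) + ccost D (per D m) (y m) - u m) ` children D n)"
          using A n False unfolding stepA_def by auto
        also have "\<dots> \<le> eta n"
        proof (subst Max_le_iff, use fin in simp, use ne in simp, intro ballI)
          fix c assume "c \<in> (\<lambda>m. fcost D (per D m) (cumx D x' m) + ccost D (per D m) (y m) - u m) ` children D n"
          then obtain m where m: "m \<in> children D n" and c: "c = fcost D (per D m) (cumx D x' m) + ccost D (per D m) (y m) - u m" by auto
          have mT: "m \<in> Tn D" "m \<noteq> rt D" "par D m = n" using m unfolding children_def by auto
          have "fcost D (per D m) (cumx D x m) + ccost D (per D m) (y m) \<le> u m + eta n"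
            using F mT unfolding feasible_def by auto
          then show "c \<le> eta n" using c fle[OF mT(1)] by simp
        qed
        finally show ?thesis .
      qed
      then show ?thesis using l0 by (simp add: mult_left_mono)
    qed
    have "wfac D n * fcost D (per D n) (cumx D x' n) \<le> wfac D n * fcost D (per D n) (cumx D x n)"
      using w fle[OF n] by (simp add: mult_left_mono)
    then show "prob D n * (wfac D n * fcost D (per D n) (cumx D x' n) + lamtil D n * eta' n)
        \<le> prob D n * (wfac D n * fcost D (per D n) (cumx D x n) + lamtil D n * eta n)"
      using e vd_facts(7)[OF vd n] by (intro mult_left_mono) auto
  qed
  show ?thesis unfolding zMS_split using G Fx by simp
qed

lemma step_feasible':
  assumes vd: "valid_data D" and F: "feasible D b s" and A: "stepA D s s'" and B: "stepB D s'"
  shows "feasible D True s'"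
  using step_feasible[OF vd, of b "fst s" "fst (snd s)" "fst (snd (snd s))" "snd (snd (snd s))"
      "fst s'" "fst (snd s')" "fst (snd (snd s'))" "snd (snd (snd s'))"] F A B by simp

lemma step_mono':
  assumes vd: "valid_data D" and F: "feasible D True s" and A: "stepA D s s'" and B: "stepB D s'"
  shows "zMS D s' \<le> zMS D s"
  using step_mono[OF vd, of "fst s" "fst (snd s)" "fst (snd (snd s))" "snd (snd (snd s))"
      "fst s'" "fst (snd s')" "fst (snd (snd s'))" "snd (snd (snd s'))"] F A B by simp

theorem proposition3:
  fixes D :: "'n msdata" and K :: nat and it :: "nat \<Rightarrow> 'n sol" and sstar :: "'n sol"
  assumes "valid_data D"
    and "is_opt D True sstar"
    and "alg_run D K it"
  shows "(\<forall>k. 1 \<le> k \<and> k \<le> K \<longrightarrow> feasible D True (it k)) \<and>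
         (\<forall>k. 1 \<le> k \<and> k + 1 \<le> K \<longrightarrow>
            zMS D sstar \<le> zMS D (it (k + 1)) \<and> zMS D (it (k + 1)) \<le> zMS D (it k))"
proof -
  have vd: "valid_data D" by fact
  have run: "\<And>k. k < K \<Longrightarrow> stepA D (it k) (it (Suc k)) \<and> stepB D (it (Suc k))"
    and f0: "feasible D False (it 0)"
    using assms(3) unfolding alg_run_def is_opt_def by auto
  have feas: "k \<le> K \<Longrightarrow> feasible D (0 < k) (it k)" for k
  proof (induction k)
    case 0 then show ?case using f0 by simp
  next
    case (Suc k)
    then have "feasible D (0 < k) (it k)" by simp
    then show ?case using step_feasible'[OF vd _ conjunct1[OF run] conjunct2[OF run]] Suc.prems by simp
  qed
  have F: "\<forall>k. 1 \<le> k \<and> k \<le> K \<longrightarrow> feasible D True (it k)"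
    using feas by fastforce
  show ?thesis
  proof (intro conjI allI impI)
    fix k assume k: "1 \<le> k \<and> k + 1 \<le> K"
    have f1: "feasible D True (it (k + 1))" using F k by simp
    then show "zMS D sstar \<le> zMS D (it (k + 1))" using assms(2) unfolding is_opt_def by blast
    have "feasible D True (it k)" using F k by simp
    moreover have "k < K" using k by simp
    ultimately show "zMS D (it (k + 1)) \<le> zMS D (it k)"
      using step_mono'[OF vd] run by simp
  qed (use F in auto)
qed

end
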